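(* Let $n\ge1$, $G\geq1$, let $W$ be an $n\times G$ matrix and $Z$ an $n\times G$ matrix with entries in $\{0,1\}$ such that each row of $W$ has exactly one entry equal to $1$, and $Z_{ig}\le W_{ig}$ for all $i,g$. Let $n_g=\sum_iW_{ig}$ and $m_g=\sum_iZ_{ig}$, and suppose $m_g\geq 2$ and $n_g-m_g\geq2$ for all $g=1,\dots,G$. Let $M_W=I_n-W(W'W)^{-1}W'$, $P=M_WZ(Z'M_WZ)^{-1}Z'M_W$, $V=[Z,W]$ and $M_{Z,W}=I_n-V(V'V)^{-1}V'$. If $D$ is the $n\times n$ diagonal matrix with elements $$D_{ii}=\sum_{g=1}^G\frac{1}{n_g}W_{ig}\left[\frac{n_g-m_g}{m_g-1}Z_{ig}+\frac{m_g}{n_g-m_g-1}(1-Z_{ig})\right],$$ then $P_{ii}=[M_{Z,W}DM_{Z,W}]_{ii}$ for all $i=1,\dots,n$. *)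

theory Defs
  imports "HOL-Analysis.Analysis"
begin

definition hconcat :: "real^'k^'n \<Rightarrow> real^'l^'n \<Rightarrow> real^('k + 'l)^'n" where
  "hconcat A B = (\<chi> i c. case c of Inl k \<Rightarrow> A $ i $ k | Inr l \<Rightarrow> B $ i $ l)"

definition annihilator :: "real^'k^'n \<Rightarrow> real^'n^'n" where
  "annihilator X = mat 1 - X ** matrix_inv (transpose X ** X) ** transpose X"

end

theory Submission
  imports Defs
begin


lemma mmul_entry: "((A::real^'m^'n) ** B) $ i $ j = (\<Sum>k\<in>UNIV. A $ i $ k * B $ k $ j)"
  by (simp add: matrix_matrix_mult_def)
lemma tr_entry: "transpose (A::real^'m^'n) $ i $ j = A $ j $ i"
  by (simp add: transpose_def)
lemma mat_entry: "(mat k :: real^'n^'n) $ i $ j = (if i = j then k else 0)"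
  by (simp add: mat_def)

lemma inv_unique:
  fixes A B :: "real^'n^'n"
  assumes "A ** B = mat 1" shows "matrix_inv A = B"
proof -
  have BA: "B ** A = mat 1" using assms matrix_left_right_inverse by blast
  define A' where "A' = matrix_inv A"
  have "A ** A' = mat 1 \<and> A' ** A = mat 1"
    unfolding A'_def matrix_inv_def by (rule someI[of _ B]) (use assms BA in auto)
  hence "A' = A' ** (A ** B)" using assms by simp
  also have "\<dots> = B" using \<open>A ** A' = mat 1 \<and> A' ** A = mat 1\<close> by (simp add: matrix_mul_assoc)
  finally show ?thesis by (simp add: A'_def)
qed

lemma sum_UNIV_plus:
  "(\<Sum>c\<in>(UNIV::('a::finite + 'b::finite) set). f c) = (\<Sum>a\<in>UNIV. f (Inl a)) + (\<Sum>b\<in>UNIV. f (Inr b))"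
  using sum.Plus[of "UNIV::'a set" "UNIV::'b set" f] by (simp add: comp_def)

lemma grp_sum:
  fixes grp :: "'n::finite \<Rightarrow> 'g" and z :: "'n \<Rightarrow> real"
  assumes z01: "\<And>i. z i = 0 \<or> z i = 1"
  shows "(\<Sum>k\<in>UNIV. if grp k = g then f (z k) else 0)
     = (\<Sum>k\<in>UNIV. if grp k = g then z k else 0) * f 1
       + ((\<Sum>k\<in>UNIV. if grp k = g then 1 else 0) - (\<Sum>k\<in>UNIV. if grp k = g then z k else 0)) * f 0"
proof -
  have "(\<Sum>k\<in>UNIV. if grp k = g then f (z k) else 0)
      = (\<Sum>k\<in>UNIV. (if grp k = g then z k else 0) * f 1 + ((if grp k = g then 1 else 0) - (if grp k = g then z k else 0)) * f 0)"
  proof -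
    have zc: "f (z k) = z k * f 1 + (1 - z k) * f 0" for k using z01[of k] by auto
    show ?thesis by (rule sum.cong) (auto simp: zc)
  qed
  also have "\<dots> = (\<Sum>k\<in>UNIV. if grp k = g then z k else 0) * f 1
       + ((\<Sum>k\<in>UNIV. if grp k = g then 1 else 0) - (\<Sum>k\<in>UNIV. if grp k = g then z k else 0)) * f 0"
    by (simp only: sum.distrib sum_distrib_right[symmetric] sum_subtractf)
  finally show ?thesis .
qed

lemma grp_setup:
  fixes W Z :: "real^'g^'n"
  assumes W01: "\<forall>i g. W $ i $ g \<in> {0, 1}"
    and Z01: "\<forall>i g. Z $ i $ g \<in> {0, 1}"
    and Wrow: "\<forall>i. \<exists>!g. W $ i $ g = 1"
    and ZleW: "\<forall>i g. Z $ i $ g \<le> W $ i $ g"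
  obtains grp :: "'n \<Rightarrow> 'g" and z :: "'n \<Rightarrow> real"
  where "\<And>i g. W $ i $ g = (if grp i = g then 1 else 0)"
    "\<And>i g. Z $ i $ g = (if grp i = g then z i else 0)"
    "\<And>i. z i = 0 \<or> z i = 1"
proof -
  define grp where "grp i = (THE g. W $ i $ g = 1)" for i
  have g1: "W $ i $ grp i = 1" for i
    unfolding grp_def by (rule theI'[OF Wrow[rule_format, of i]])
  have uq: "g = grp i" if "W $ i $ g = 1" for i g
  proof -
    obtain x where x: "W $ i $ x = 1" "\<And>y. W $ i $ y = 1 \<Longrightarrow> y = x"
      using Wrow[rule_format, of i] by (elim ex1E) blast
    have "g = x" using x(2) that .
    moreover have "grp i = x" using x(2) g1 .
    ultimately show ?thesis by simp
  qed
  have Weq: "W $ i $ g = (if grp i = g then 1 else 0)" for i g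
  proof (cases "grp i = g")
    case False
    then have "W $ i $ g \<noteq> 1" using uq by blast
    moreover have "W $ i $ g \<in> {0, 1}" using W01 by simp
    ultimately show ?thesis using False by simp
  qed (use g1 in force)
  have Zeq: "Z $ i $ g = (if grp i = g then Z $ i $ grp i else 0)" for i g
  proof (cases "grp i = g")
    case False
    then have "W $ i $ g = 0" using Weq[of i g] by simp
    then have "Z $ i $ g \<le> 0" using ZleW[rule_format, of i g] by simp
    moreover have "Z $ i $ g \<in> {0, 1}" using Z01 by simp
    ultimately show ?thesis using False by auto
  qed simp
  have z01: "Z $ i $ grp i = 0 \<or> Z $ i $ grp i = 1" for i
    using Z01[rule_format, of i "grp i"] by simp
  show ?thesis
    by (rule that[of grp "\<lambda>i. Z $ i $ grp i"]) (rule Weq, rule Zeq, rule z01)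
qed


lemma ifz1: "(if P then a else 0) * b = (if P then a * b else (0::real))" by simp
lemma ifz2: "a * (if P then b else 0) = (if P then a * b else (0::real))" by simp

lemma hc_entry: "hconcat Z W $ i $ c = (case c of Inl k \<Rightarrow> Z $ i $ k | Inr k \<Rightarrow> W $ i $ k)"
  by (simp add: hconcat_def)

lemma grp_pair:
  fixes grp :: "'n::finite \<Rightarrow> 'g"
  shows "(\<Sum>j\<in>UNIV. (if grp i = grp j then c else 0) * (if grp j = g then f j else 0))
     = (if grp i = g then c * (\<Sum>j\<in>UNIV. if grp j = g then f j else 0) else (0::real))"
proof (cases "grp i = g")
  case True
  then have "(\<Sum>j\<in>UNIV. (if grp i = grp j then c else 0) * (if grp j = g then f j else 0))
     = (\<Sum>j\<in>UNIV. c * (if grp j = g then f j else 0))" by (intro sum.cong) auto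
  then show ?thesis using True by (simp add: sum_distrib_left)
next
  case False
  then show ?thesis by (auto intro!: sum.neutral)
qed

lemma A1: fixes n m :: real assumes "n \<noteq> 0" "m \<noteq> 0" "n - m \<noteq> 0" "m - 1 \<noteq> 0"
  shows "(1 - m/n)^2 / (m - m*m/n) = (1 - 1/m - 1/m) * ((n-m)/(n*(m-1))) + m * (1/m * ((n-m)/(n*(m-1))) * (1/m))"
proof -
  have "m - m*m/n = m*(n-m)/n" using assms by (simp add: field_simps)
  moreover have "1 - m/n = (n-m)/n" using assms by (simp add: field_simps)
  ultimately have l: "(1 - m/n)^2 / (m - m*m/n) = (n-m)/(n*m)" using assms by (simp add: field_simps power2_eq_square)
  define d where "d = (n-m)/(n*(m-1))"
  have "(1 - 1/m - 1/m) * d + m * (1/m * d * (1/m)) = (1 - 1/m - 1/m)*d + 1/m*d" using assms by simp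
  also have "\<dots> = (1 - 1/m)*d" by algebra
  also have "\<dots> = (m-1)/m * d" using assms by (simp add: diff_divide_distrib)
  also have "\<dots> = (n-m)/(n*m)" unfolding d_def using assms by (simp add: field_simps)
  finally show ?thesis using l unfolding d_def by simp
qed
lemma A0: fixes n m :: real assumes "n \<noteq> 0" "m \<noteq> 0" "n - m \<noteq> 0" "n - m - 1 \<noteq> 0"
  shows "(0 - m/n)^2 / (m - m*m/n) = (1 - 1/(n-m) - 1/(n-m)) * (m/(n*(n-m-1))) + (n-m) * (1/(n-m) * (m/(n*(n-m-1))) * (1/(n-m)))"
proof -
  have "m - m*m/n = m*(n-m)/n" using assms by (simp add: field_simps)
  then have l: "(0 - m/n)^2 / (m - m*m/n) = m/(n*(n-m))" using assms by (simp add: field_simps power2_eq_square)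
  define a where "a = n - m"
  have a0: "a \<noteq> 0" "a - 1 \<noteq> 0" using assms by (auto simp: a_def)
  define d where "d = m/(n*(a-1))"
  have "(1 - 1/a - 1/a) * d + a * (1/a * d * (1/a)) = (1 - 1/a - 1/a)*d + 1/a*d" using a0 by simp
  also have "\<dots> = (1 - 1/a)*d" by algebra
  also have "\<dots> = (a-1)/a * d" using a0 by (simp add: diff_divide_distrib)
  also have "\<dots> = m/(n*a)" unfolding d_def using a0 assms(1) by (simp add: field_simps)
  finally show ?thesis using l unfolding d_def a_def by (simp add: algebra_simps)
qed

lemma core:
  fixes W Z :: "real^'g^'n" and D :: "real^'n^'n" and grp :: "'n \<Rightarrow> 'g" and z :: "'n \<Rightarrow> real"
    and nn mm :: "'g \<Rightarrow> real"
  assumes Weq: "\<And>i g. W $ i $ g = (if grp i = g then 1 else 0)"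
   and Zeq: "\<And>i g. Z $ i $ g = (if grp i = g then z i else 0)"
   and z01: "\<And>i. z i = 0 \<or> z i = 1"
   and nn_def: "\<And>g. nn g = (\<Sum>i\<in>UNIV. if grp i = g then 1 else 0)"
   and mm_def: "\<And>g. mm g = (\<Sum>i\<in>UNIV. if grp i = g then z i else 0)"
   and mge2: "\<And>g. mm g \<ge> 2" and nmge2: "\<And>g. nn g - mm g \<ge> 2"
   and Deq: "D = (\<chi> i j. if i = j then (1 / nn (grp i)) * ((nn (grp i) - mm (grp i)) / (mm (grp i) - 1) * z i
              + mm (grp i) / (nn (grp i) - mm (grp i) - 1) * (1 - z i)) else 0)"
  shows "(annihilator W ** Z ** matrix_inv (transpose Z ** annihilator W ** Z) ** transpose Z ** annihilator W) $ i $ i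
     = (annihilator (hconcat Z W) ** D ** annihilator (hconcat Z W)) $ i $ i"
proof -
  have zz: "z k * z k = z k" for k using z01[of k] by auto
  have nn0: "nn g \<noteq> 0" for g using mge2[of g] nmge2[of g] by linarith
  have mm0: "mm g \<noteq> 0" for g using mge2[of g] by linarith
  have nm0: "nn g - mm g \<noteq> 0" for g using nmge2[of g] by linarith
  define QW :: "real^'g^'g" where "QW = (\<chi> g h. if g = h then 1 / nn g else 0)"
  have WW: "transpose W ** W = (\<chi> g h. if g = h then nn g else 0)"
    by (auto simp: vec_eq_iff mmul_entry tr_entry Weq nn_def ifz1 ifz2 cong: if_cong)
  have QWi: "matrix_inv (transpose W ** W) = QW"
    by (rule inv_unique) (auto simp: WW QW_def vec_eq_iff mmul_entry mat_entry ifz1 ifz2 nn0 cong: if_cong)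
  have MW: "annihilator W = (\<chi> i j. (if i = j then 1 else 0) - (if grp i = grp j then 1 / nn (grp i) else 0))"
    unfolding annihilator_def QWi
    by (auto simp: QW_def vec_eq_iff mmul_entry mat_entry tr_entry Weq ifz1 ifz2 cong: if_cong)
  have MWZ: "annihilator W ** Z = (\<chi> i g. if grp i = g then z i - mm g / nn g else 0)"
  proof -
    have "(\<Sum>j\<in>UNIV. ((if i = j then 1 else 0) - (if grp i = grp j then 1 / nn (grp i) else 0)) * Z $ j $ g)
      = (if grp i = g then z i - mm g / nn g else 0)" for i g
    proof -
      have e1: "(\<Sum>j\<in>UNIV. (if i = j then 1 else 0) * Z $ j $ g) = Z $ i $ g" by (simp add: ifz1)
      have "(\<Sum>j\<in>UNIV. ((if i = j then 1 else 0) - (if grp i = grp j then 1 / nn (grp i) else 0)) * Z $ j $ g)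
        = (\<Sum>j\<in>UNIV. (if i = j then 1 else 0) * Z $ j $ g) - (\<Sum>j\<in>UNIV. (if grp i = grp j then 1 / nn (grp i) else 0) * (if grp j = g then z j else 0))"
        by (simp only: left_diff_distrib sum_subtractf Zeq)
      also have "\<dots> = (if grp i = g then z i - mm g / nn g else 0)"
        unfolding grp_pair e1 by (simp add: Zeq mm_def)
      finally show ?thesis .
    qed
    then show ?thesis by (simp add: MW vec_eq_iff mmul_entry)
  qed
  define cz where "cz g = mm g - mm g * mm g / nn g" for g
  have cz0: "cz g \<noteq> 0" for g
  proof -
    have "cz g = mm g * (nn g - mm g) / nn g" unfolding cz_def using nn0[of g] by (simp add: field_simps)
    then show ?thesis using nn0[of g] mm0[of g] nm0[of g] by simp
  qed
  have ZMZ: "transpose Z ** annihilator W ** Z = (\<chi> g h. if g = h then cz g else 0)"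
  proof -
    have "(\<Sum>i\<in>UNIV. (if grp i = g then z i else 0) * (if grp i = h then z i - mm h / nn h else 0))
        = (if g = h then cz g else 0)" for g h
    proof (cases "g = h")
      case True
      have "(\<Sum>i\<in>UNIV. (if grp i = g then z i else 0) * (if grp i = h then z i - mm h / nn h else 0))
         = (\<Sum>i\<in>UNIV. (if grp i = g then z i else 0) - (mm g / nn g) * (if grp i = g then z i else 0))"
        using True by (intro sum.cong) (auto simp: algebra_simps zz)
      also have "\<dots> = cz g" unfolding cz_def mm_def
        by (simp only: sum_subtractf sum_distrib_left[symmetric]) (simp add: mm_def[symmetric])
      finally show ?thesis using True by simp
    next
      case False
      then show ?thesis by (auto intro!: sum.neutral)
    qed
    then show ?thesis by (simp add: matrix_mul_assoc[symmetric] MWZ vec_eq_iff mmul_entry tr_entry Zeq)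
  qed
  define QZ :: "real^'g^'g" where "QZ = (\<chi> g h. if g = h then 1 / cz g else 0)"
  have QZi: "matrix_inv (transpose Z ** annihilator W ** Z) = QZ"
    by (rule inv_unique) (auto simp: ZMZ QZ_def vec_eq_iff mmul_entry mat_entry ifz1 ifz2 cz0 cong: if_cong)
  have symMW: "transpose (annihilator W) = annihilator W"
    by (auto simp: MW vec_eq_iff tr_entry)
  have Pii: "(annihilator W ** Z ** matrix_inv (transpose Z ** annihilator W ** Z) ** transpose Z ** annihilator W) $ i $ i
     = (z i - mm (grp i) / nn (grp i))^2 / cz (grp i)" for i
  proof -
    have t: "transpose Z ** annihilator W = transpose (annihilator W ** Z)"
      by (simp add: matrix_transpose_mul symMW)
    have "annihilator W ** Z ** QZ ** transpose Z ** annihilator W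
       = (annihilator W ** Z ** QZ) ** (transpose Z ** annihilator W)"
      by (simp add: matrix_mul_assoc)
    then have "annihilator W ** Z ** QZ ** transpose Z ** annihilator W
       = (annihilator W ** Z ** QZ) ** transpose (annihilator W ** Z)" unfolding t .
    then show ?thesis
      by (simp add: QZi MWZ QZ_def mmul_entry tr_entry ifz1 ifz2 power2_eq_square cong: if_cong)
  qed
  define det where "det g = mm g * (nn g - mm g)" for g
  have det0: "det g \<noteq> 0" for g using mm0 nm0 by (simp add: det_def)
  have e1: "mm g * nn g - mm g * mm g = det g" for g by (simp add: det_def algebra_simps)
  have e2: "nn g * mm g - mm g * mm g = det g" for g by (simp add: det_def algebra_simps)
  have d1: "mm g * nn g / det g - mm g * mm g / det g = 1" for g
    by (simp only: diff_divide_distrib[symmetric] e1) (simp add: det0)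
  have d2: "nn g * mm g / det g - mm g * mm g / det g = 1" for g
    by (simp only: diff_divide_distrib[symmetric] e2) (simp add: det0)
  define V where "V = hconcat Z W"
  have Ve: "V $ i $ c = (case c of Inl k \<Rightarrow> (if grp i = k then z i else 0) | Inr k \<Rightarrow> (if grp i = k then 1 else 0))" for i c
    by (cases c) (simp_all add: V_def hc_entry Zeq Weq)
  define GG :: "real^('g+'g)^('g+'g)" where "GG = (\<chi> c d. case c of
     Inl g \<Rightarrow> (case d of Inl h \<Rightarrow> if g = h then mm g else 0 | Inr h \<Rightarrow> if g = h then mm g else 0)
   | Inr g \<Rightarrow> (case d of Inl h \<Rightarrow> if g = h then mm g else 0 | Inr h \<Rightarrow> if g = h then nn g else 0))"
  define RR :: "real^('g+'g)^('g+'g)" where "RR = (\<chi> c d. case c of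
     Inl g \<Rightarrow> (case d of Inl h \<Rightarrow> if g = h then nn g / det g else 0 | Inr h \<Rightarrow> if g = h then - mm g / det g else 0)
   | Inr g \<Rightarrow> (case d of Inl h \<Rightarrow> if g = h then - mm g / det g else 0 | Inr h \<Rightarrow> if g = h then mm g / det g else 0))"
  have VV: "transpose V ** V = GG"
    unfolding vec_eq_iff
  proof (intro allI)
    fix c d
    show "(transpose V ** V) $ c $ d = GG $ c $ d"
      by (cases c; cases d) (auto simp: GG_def mmul_entry tr_entry Ve ifz1 ifz2 zz mm_def nn_def cong: if_cong)
  qed
  have GR: "GG ** RR = mat 1"
    unfolding vec_eq_iff
  proof (intro allI)
    fix c e
    show "(GG ** RR) $ c $ e = mat 1 $ c $ e"
      by (cases c; cases e) (auto simp: GG_def RR_def mmul_entry mat_entry sum_UNIV_plus ifz1 ifz2 d1 d2 cong: if_cong)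
  qed
  have RRi: "matrix_inv (transpose V ** V) = RR"
    unfolding VV by (rule inv_unique[OF GR])
  have VR: "V ** RR = (\<chi> i d. case d of Inl h \<Rightarrow> if grp i = h then (z i * nn h - mm h) / det h else 0
      | Inr h \<Rightarrow> if grp i = h then (mm h - z i * mm h) / det h else 0)"
    unfolding vec_eq_iff
  proof (intro allI)
    fix i d
    show "(V ** RR) $ i $ d = (\<chi> i d. case d of Inl h \<Rightarrow> if grp i = h then (z i * nn h - mm h) / det h else 0
      | Inr h \<Rightarrow> if grp i = h then (mm h - z i * mm h) / det h else 0) $ i $ d"
      by (cases d) (auto simp: RR_def mmul_entry Ve sum_UNIV_plus ifz1 ifz2 diff_divide_distrib cong: if_cong)
  qed
  define hh where "hh i j = ((z i * nn (grp i) - mm (grp i)) * z j + (mm (grp i) - z i * mm (grp i))) / det (grp i)" for i j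
  have VRV: "V ** RR ** transpose V = (\<chi> i j. if grp i = grp j then hh i j else 0)"
    by (auto simp: vec_eq_iff VR hh_def mmul_entry tr_entry Ve sum_UNIV_plus ifz1 ifz2 add_divide_distrib cong: if_cong)
  have MZW: "annihilator (hconcat Z W) = (\<chi> i j. (if i = j then 1 else 0) - (if grp i = grp j then hh i j else 0))"
    unfolding V_def[symmetric] annihilator_def RRi VRV by (simp add: vec_eq_iff mat_entry)
  define M where "M = annihilator (hconcat Z W)"
  define g where "g = grp i"
  define ddf where "ddf t = (1 / nn g) * ((nn g - mm g) / (mm g - 1) * t + mm g / (nn g - mm g - 1) * (1 - t))" for t
  define Ha where "Ha t = ((z i * nn g - mm g) * t + (mm g - z i * mm g)) / det g" for t
  define Hb where "Hb t = ((t * nn g - mm g) * z i + (mm g - t * mm g)) / det g" for t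
  define F where "F t = Ha t * ddf t * Hb t" for t
  have MD: "(M ** D) $ i $ k = M $ i $ k * D $ k $ k" for k
    by (simp add: Deq mmul_entry ifz2)
  have tk: "(M ** D) $ i $ k * M $ k $ i = (if i = k then (1 - Ha (z i) - Ha (z i)) * ddf (z i) else 0)
      + (if grp k = g then F (z k) else 0)" for k
  proof (cases "grp k = g")
    case True
    have hik: "hh i k = Ha (z k)" unfolding hh_def Ha_def g_def ..
    have hki: "hh k i = Hb (z k)" unfolding hh_def Hb_def g_def using True g_def by simp
    have "Hb (z i) = Ha (z i)" unfolding Ha_def Hb_def by (simp add: algebra_simps)
    have dk: "D $ k $ k = ddf (z k)" using True by (simp add: Deq ddf_def)
    show ?thesis using True hik hki \<open>Hb (z i) = Ha (z i)\<close> unfolding MD dk unfolding M_def MZW g_def F_def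
      by (auto simp: algebra_simps)
  next
    case False
    then have "i \<noteq> k" using g_def by auto
    then show ?thesis using False unfolding MD unfolding M_def MZW g_def by auto
  qed
  have "(M ** D ** M) $ i $ i = (\<Sum>k\<in>UNIV. (M ** D) $ i $ k * M $ k $ i)" by (simp add: mmul_entry)
  also have "\<dots> = (1 - Ha (z i) - Ha (z i)) * ddf (z i) + (\<Sum>k\<in>UNIV. if grp k = g then F (z k) else 0)"
    unfolding tk by (simp add: sum.distrib)
  also have "\<dots> = (1 - Ha (z i) - Ha (z i)) * ddf (z i) + (mm g * F 1 + (nn g - mm g) * F 0)"
    by (simp only: grp_sum[OF z01, of grp g F] nn_def mm_def)
  finally have R: "(M ** D ** M) $ i $ i = (1 - Ha (z i) - Ha (z i)) * ddf (z i) + (mm g * F 1 + (nn g - mm g) * F 0)" .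
  have L: "(annihilator W ** Z ** matrix_inv (transpose Z ** annihilator W ** Z) ** transpose Z ** annihilator W) $ i $ i
     = (z i - mm g / nn g)^2 / cz g" unfolding Pii g_def ..
  have m1: "mm g - 1 \<noteq> 0" using mge2[of g] by linarith
  have nm1: "nn g - mm g - 1 \<noteq> 0" using nmge2[of g] by linarith
  have "(z i - mm g / nn g)^2 / cz g = (1 - Ha (z i) - Ha (z i)) * ddf (z i) + (mm g * F 1 + (nn g - mm g) * F 0)"
  proof (cases "z i = 1")
    case True
    have h1: "Ha 1 = 1 / mm g" using True mm0[of g] nm0[of g] by (simp add: Ha_def det_def)
    have hb1: "Hb 1 = 1 / mm g" using True mm0[of g] nm0[of g] by (simp add: Hb_def det_def)
    have h0: "Ha 0 = 0" using True by (simp add: Ha_def)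
    have dd1: "ddf 1 = (nn g - mm g) / (nn g * (mm g - 1))" by (simp add: ddf_def)
    show ?thesis using A1[of "nn g" "mm g", OF nn0 mm0 nm0 m1]
      by (simp add: True F_def h1 hb1 h0 dd1 cz_def)
  next
    case False
    then have z0: "z i = 0" using z01[of i] by auto
    have h1: "Ha 1 = 0" using z0 by (simp add: Ha_def)
    have h0: "Ha 0 = 1 / (nn g - mm g)" using z0 mm0[of g] nm0[of g] by (simp add: Ha_def det_def)
    have hb0: "Hb 0 = 1 / (nn g - mm g)" using z0 mm0[of g] nm0[of g] by (simp add: Hb_def det_def)
    have dd0: "ddf 0 = mm g / (nn g * (nn g - mm g - 1))" by (simp add: ddf_def)
    show ?thesis using A0[of "nn g" "mm g", OF nn0 mm0 nm0 nm1]
      by (simp add: z0 F_def h1 hb0 h0 dd0 cz_def)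
  qed
  then show ?thesis using L R unfolding M_def by simp
qed

theorem lemma5:
  fixes W Z :: "real^'g^'n"
    and D :: "real^'n^'n"
  assumes W01: "\<forall>i g. W $ i $ g \<in> {0, 1}"
    and Z01: "\<forall>i g. Z $ i $ g \<in> {0, 1}"
    and Wrow: "\<forall>i. \<exists>!g. W $ i $ g = 1"
    and ZleW: "\<forall>i g. Z $ i $ g \<le> W $ i $ g"
    and mge2: "\<forall>g. (\<Sum>i\<in>UNIV. Z $ i $ g) \<ge> 2"
    and nmge2: "\<forall>g. (\<Sum>i\<in>UNIV. W $ i $ g) - (\<Sum>i\<in>UNIV. Z $ i $ g) \<ge> 2"
    and D_def: "D = (\<chi> i j. if i = j then
        (\<Sum>g\<in>UNIV.
          (let ng = (\<Sum>k\<in>UNIV. W $ k $ g); mg = (\<Sum>k\<in>UNIV. Z $ k $ g) in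
            (1 / ng) * W $ i $ g *
              ((ng - mg) / (mg - 1) * Z $ i $ g + mg / (ng - mg - 1) * (1 - Z $ i $ g))))
        else 0)"
  shows "\<forall>i. (let MW = annihilator W;
               P = MW ** Z ** matrix_inv (transpose Z ** MW ** Z) ** transpose Z ** MW;
               MZW = annihilator (hconcat Z W)
           in P $ i $ i = (MZW ** D ** MZW) $ i $ i)"
proof -
  obtain grp :: "'n \<Rightarrow> 'g" and z :: "'n \<Rightarrow> real" where
    Weq: "\<And>i g. W $ i $ g = (if grp i = g then 1 else 0)" and
    Zeq: "\<And>i g. Z $ i $ g = (if grp i = g then z i else 0)" and
    z01: "\<And>i. z i = 0 \<or> z i = 1"
    by (rule grp_setup[OF W01 Z01 Wrow ZleW], blast)
  define nn where "nn g = (\<Sum>i\<in>UNIV. W $ i $ g)" for g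
  define mm where "mm g = (\<Sum>i\<in>UNIV. Z $ i $ g)" for g
  have nn': "nn g = (\<Sum>i\<in>UNIV. if grp i = g then 1 else 0)" for g
    unfolding nn_def Weq by (rule refl)
  have mm': "mm g = (\<Sum>i\<in>UNIV. if grp i = g then z i else 0)" for g
    unfolding mm_def Zeq by (rule refl)
  have m2: "mm g \<ge> 2" for g using mge2 by (simp add: mm_def)
  have nm2: "nn g - mm g \<ge> 2" for g using nmge2 by (simp add: mm_def nn_def)
  define dd where "dd i = (1 / nn (grp i)) * ((nn (grp i) - mm (grp i)) / (mm (grp i) - 1) * z i
              + mm (grp i) / (nn (grp i) - mm (grp i) - 1) * (1 - z i))" for i
  have Dsum: "(\<Sum>g\<in>UNIV. (let ng = nn g; mg = mm g in (1 / ng) * W $ i $ g *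
              ((ng - mg) / (mg - 1) * Z $ i $ g + mg / (ng - mg - 1) * (1 - Z $ i $ g)))) = dd i" for i
  proof -
    have "(\<Sum>g\<in>UNIV. (let ng = nn g; mg = mm g in (1 / ng) * W $ i $ g *
              ((ng - mg) / (mg - 1) * Z $ i $ g + mg / (ng - mg - 1) * (1 - Z $ i $ g))))
       = (\<Sum>g\<in>UNIV. if grp i = g then dd i else 0)"
      by (rule sum.cong) (auto simp: Weq Zeq Let_def dd_def)
    also have "\<dots> = dd i" by simp
    finally show ?thesis .
  qed
  have Deq: "D = (\<chi> i j. if i = j then (1 / nn (grp i)) * ((nn (grp i) - mm (grp i)) / (mm (grp i) - 1) * z i
              + mm (grp i) / (nn (grp i) - mm (grp i) - 1) * (1 - z i)) else 0)"
    unfolding D_def nn_def[symmetric] mm_def[symmetric] Dsum dd_def ..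
  show ?thesis
    unfolding Let_def
    by (intro allI) (rule core[OF Weq Zeq z01 nn' mm' m2 nm2 Deq])
qed

end
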